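(* Let $X$ be a real Banach space and $Y$ a finite dimensional real Banach space. The following are equivalent: (1) for every finite dimensional subspace $Z$ of $X$ and every $\varepsilon>0$ there is an operator $T\in L(Y,X)$ with $\|T\|=1$ such that $\|z+T(y)\|\ge(1-\varepsilon)(\|z\|+\|y\|)$ for all $y\in Y$, $z\in Z$; (2) for every finite sets $\{z_1,\dots,z_n\}\subseteq S_X$, $\{y_1,\dots,y_m\}\subseteq S_Y$ and every $\varepsilon>0$ there is an operator $T\in L(Y,X)$ with $\|T\|=1$ such that $\|z_i+T(y_j)\|>2-\varepsilon$ for all $1\le i\le n$, $1\le j\le m$.
   Context: $S_W$ denotes the unit sphere of a Banach space $W$; $L(Y,X)$ is the space of bounded linear operators from $Y$ to $X$ with the operator norm. *)

theory Defs
  imports "HOL-Analysis.Analysis"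
begin

definition fin_dim_subspace :: "'a::real_vector set \<Rightarrow> bool" where
  "fin_dim_subspace Z \<longleftrightarrow> subspace Z \<and> (\<exists>B. finite B \<and> span B = Z)"

end

theory Submission imports Defs begin

lemma closed_sphere_gen: "closed (sphere (a::'a::metric_space) r)"
proof -
  have "sphere a r = cball a r - ball a r" by auto
  then show ?thesis by (simp add: closed_Diff)
qed

lemma closed_of_compact_balls:
  fixes S :: "'a::real_normed_vector set"
  assumes "\<And>R. compact (S \<inter> cball 0 R)"
  shows "closed S"
proof -
  have "x \<in> S" if xc: "x \<in> closure S" for x
  proof -
    let ?C = "S \<inter> cball 0 (norm x + 1)"
    have "x \<in> closure ?C"
      unfolding closure_approachable
    proof (intro allI impI)
      fix e :: real assume e: "e > 0"
      obtain y where y: "y \<in> S" "dist y x < min e 1"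
        using xc e unfolding closure_approachable by (metis min_less_iff_conj zero_less_one)
      have "norm y \<le> norm x + 1"
        using y(2) norm_triangle_ineq2[of y x] by (simp add: dist_norm)
      then show "\<exists>y\<in>?C. dist y x < e" using y by auto
    qed
    moreover have "closed ?C" using assms compact_imp_closed by blast
    ultimately show ?thesis by (simp add: closure_closed)
  qed
  then show ?thesis using closure_subset_eq closure_subset by blast
qed

lemma fin_span_compact:
  fixes S :: "'a::banach set"
  assumes "finite S"
  shows "\<forall>R. compact (span S \<inter> cball 0 R)"
  using assms
proof (induction S rule: finite_induct)
  case empty
  show ?case by (auto intro: finite_imp_compact finite_subset[of _ "{0}"])
next
  case (insert b S)
  show ?case
  proof (cases "b \<in> span S")
    case True
    then show ?thesis using insert.IH by (simp add: span_redundant)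
  next
    case False
    have cl: "closed (span S)" by (rule closed_of_compact_balls) (use insert.IH in blast)
    define d where "d = infdist b (span S)"
    have d: "d > 0" unfolding d_def
      using infdist_pos_not_in_closed[OF cl] False span_zero by blast
    have low: "\<bar>t\<bar> * d \<le> norm (s + t *\<^sub>R b)" if s: "s \<in> span S" for s t
    proof (cases "t = 0")
      case True then show ?thesis by simp
    next
      case False
      have "-(1/t) *\<^sub>R s \<in> span S" by (rule span_scale, rule s)
      then have "d \<le> dist b (-(1/t) *\<^sub>R s)" unfolding d_def by (rule infdist_le)
      also have "dist b (-(1/t) *\<^sub>R s) = norm ((1/t) *\<^sub>R (s + t *\<^sub>R b))"
        using False by (simp add: dist_norm algebra_simps)
      also have "\<dots> = norm (s + t *\<^sub>R b) / \<bar>t\<bar>" by simp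
      finally show ?thesis using False by (simp add: field_simps)
    qed
    show ?thesis
    proof
      fix R :: real
      define R' where "R' = R + R/d * norm b"
      let ?K = "(\<lambda>p. fst p + snd p *\<^sub>R b) ` ((span S \<inter> cball 0 R') \<times> {-R/d..R/d})"
      have "compact ?K"
        by (intro compact_continuous_image continuous_intros compact_Times insert.IH[rule_format] compact_Icc)
      moreover have "span (insert b S) \<inter> cball 0 R = ?K \<inter> cball 0 R"
      proof
        show "span (insert b S) \<inter> cball 0 R \<subseteq> ?K \<inter> cball 0 R"
        proof
          fix x assume x: "x \<in> span (insert b S) \<inter> cball 0 R"
          then obtain t where t: "x - t *\<^sub>R b \<in> span S" using span_breakdown_eq by blast
          define s where "s = x - t *\<^sub>R b"
          have xs: "x = s + t *\<^sub>R b" by (simp add: s_def)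
          have nx: "norm x \<le> R" using x by simp
          have "norm (s + t *\<^sub>R b) = norm x" using xs by (simp only:)
          then have "\<bar>t\<bar> * d \<le> R" using low[of s t] t nx unfolding s_def by linarith
          then have tt: "\<bar>t\<bar> \<le> R/d" using d by (simp add: field_simps)
          have "norm s \<le> norm x + \<bar>t\<bar> * norm b"
            unfolding s_def using norm_triangle_ineq4[of x "t *\<^sub>R b"] by simp
          also have "\<dots> \<le> R'" unfolding R'_def using nx tt
            by (intro add_mono mult_right_mono) auto
          finally have "s \<in> span S \<inter> cball 0 R'" using t s_def by simp
          moreover have "t \<in> {-R/d..R/d}" using tt by auto
          ultimately have "x \<in> ?K" using xs by (auto intro!: image_eqI[of _ _ "(s,t)"])
          then show "x \<in> ?K \<inter> cball 0 R" using x by blast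
        qed
        show "?K \<inter> cball 0 R \<subseteq> span (insert b S) \<inter> cball 0 R"
        proof
          fix x assume "x \<in> ?K \<inter> cball 0 R"
          then obtain p where p: "p \<in> (span S \<inter> cball 0 R') \<times> {-R/d..R/d}" "x = fst p + snd p *\<^sub>R b" "x \<in> cball 0 R" by blast
          obtain s t where st: "s \<in> span S" "x = s + t *\<^sub>R b" "x \<in> cball 0 R"
            using p by (intro that[of "fst p" "snd p"]) auto
          then have "x - t *\<^sub>R b \<in> span S" by simp
          then have "x \<in> span (insert b S)" using span_breakdown_eq[of x b S] by blast
          then show "x \<in> span (insert b S) \<inter> cball 0 R" using st by blast
        qed
      qed
      ultimately show "compact (span (insert b S) \<inter> cball 0 R)" by auto
    qed
  qed
qed

lemma key_ineq:
  fixes x v :: "'a::real_normed_vector"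
  assumes "norm x = 1" "norm v \<le> 1" "norm (x + v) \<ge> 2 - e" "a \<ge> 0" "b \<ge> 0" "e \<ge> 0"
  shows "norm (a *\<^sub>R x + b *\<^sub>R v) \<ge> (1 - e) * (a + b)"
proof (cases "a \<ge> b")
  case True
  have "a *\<^sub>R x + b *\<^sub>R v = a *\<^sub>R (x + v) - (a - b) *\<^sub>R v" by (simp add: algebra_simps)
  then have "norm (a *\<^sub>R x + b *\<^sub>R v) \<ge> norm (a *\<^sub>R (x + v)) - norm ((a - b) *\<^sub>R v)"
    by (metis norm_triangle_ineq2)
  moreover have "norm (a *\<^sub>R (x + v)) \<ge> a * (2 - e)" using assms by (simp add: mult_left_mono)
  moreover have "norm ((a - b) *\<^sub>R v) \<le> a - b" using assms True
    by (simp add: mult_left_le)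
  ultimately have "norm (a *\<^sub>R x + b *\<^sub>R v) \<ge> a + b - a * e" by (simp add: algebra_simps)
  moreover have "b * e \<ge> 0" using assms by simp
  ultimately show ?thesis by (simp add: algebra_simps)
next
  case False
  have "a *\<^sub>R x + b *\<^sub>R v = b *\<^sub>R (x + v) - (b - a) *\<^sub>R x" by (simp add: algebra_simps)
  then have "norm (a *\<^sub>R x + b *\<^sub>R v) \<ge> norm (b *\<^sub>R (x + v)) - norm ((b - a) *\<^sub>R x)"
    by (metis norm_triangle_ineq2)
  moreover have "norm (b *\<^sub>R (x + v)) \<ge> b * (2 - e)" using assms by (simp add: mult_left_mono)
  moreover have "norm ((b - a) *\<^sub>R x) = b - a" using assms False by simp
  ultimately have "norm (a *\<^sub>R x + b *\<^sub>R v) \<ge> a + b - b * e" by (simp add: algebra_simps)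
  moreover have "a * e \<ge> 0" using assms by simp
  ultimately show ?thesis by (simp add: algebra_simps)
qed


theorem mainTheorem2:
  fixes X_witness :: "'a::banach" and Y_witness :: "'b::banach"
  assumes finY: "\<exists>B::'b set. finite B \<and> span B = UNIV"
  shows "(\<forall>Z::'a set. \<forall>\<epsilon>>0. fin_dim_subspace Z \<longrightarrow>
            (\<exists>T::'b \<Rightarrow>\<^sub>L 'a. norm T = 1 \<and>
               (\<forall>y z. z \<in> Z \<longrightarrow> norm (z + blinfun_apply T y) \<ge> (1 - \<epsilon>) * (norm z + norm y))))
     \<longleftrightarrow>
         (\<forall>A::'a set. \<forall>B::'b set. \<forall>\<epsilon>>0.
            finite A \<and> A \<subseteq> sphere 0 1 \<and> finite B \<and> B \<subseteq> sphere 0 1 \<longrightarrow>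
            (\<exists>T::'b \<Rightarrow>\<^sub>L 'a. norm T = 1 \<and>
               (\<forall>z\<in>A. \<forall>y\<in>B. norm (z + blinfun_apply T y) > 2 - \<epsilon>)))"
  (is "?P \<longleftrightarrow> ?Q")
proof
  assume P: ?P
  show ?Q
  proof (intro allI impI)
    fix A :: "'a set" and B :: "'b set" and e :: real
    assume e: "e > 0" and AB: "finite A \<and> A \<subseteq> sphere 0 1 \<and> finite B \<and> B \<subseteq> sphere 0 1"
    have "fin_dim_subspace (span A)" unfolding fin_dim_subspace_def
      using AB subspace_span by blast
    moreover have "e/4 > 0" using e by simp
    ultimately obtain T :: "'b \<Rightarrow>\<^sub>L 'a" where T: "norm T = 1"
      "\<And>y z. z \<in> span A \<Longrightarrow> norm (z + blinfun_apply T y) \<ge> (1 - e/4) * (norm z + norm y)"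
      using P by blast
    have "\<forall>z\<in>A. \<forall>y\<in>B. norm (z + blinfun_apply T y) > 2 - e"
    proof (intro ballI)
      fix z y assume z: "z \<in> A" and y: "y \<in> B"
      have "norm z = 1" "norm y = 1" using z y AB by auto
      then have "norm (z + blinfun_apply T y) \<ge> (1 - e/4) * 2"
        using T(2)[of z y] span_base[OF z] by simp
      moreover have "(1 - e/4) * 2 = 2 - e/2" by (simp add: algebra_simps)
      ultimately show "norm (z + blinfun_apply T y) > 2 - e" using e by linarith
    qed
    then show "\<exists>T::'b \<Rightarrow>\<^sub>L 'a. norm T = 1 \<and> (\<forall>z\<in>A. \<forall>y\<in>B. norm (z + blinfun_apply T y) > 2 - e)"
      using T(1) by blast
  qed
next
  assume Q: ?Q
  show ?P
  proof (intro allI impI)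
    fix Z :: "'a set" and e :: real
    assume e: "e > 0" and Z: "fin_dim_subspace Z"
    obtain BZ where BZ: "finite BZ" "span BZ = Z" using Z unfolding fin_dim_subspace_def by blast
    obtain BY :: "'b set" where BY: "finite BY" "span BY = UNIV" using finY by blast
    obtain T0 :: "'b \<Rightarrow>\<^sub>L 'a" where "norm T0 = 1"
      using Q[THEN spec[of _ "{}"], THEN spec[of _ "{}"], THEN spec[of _ 1]] by auto
    then have "T0 \<noteq> 0" by auto
    then obtain y0 where "blinfun_apply T0 y0 \<noteq> 0"
      by (metis blinfun_eqI zero_blinfun.rep_eq)
    define x0 where "x0 = (1 / norm (blinfun_apply T0 y0)) *\<^sub>R blinfun_apply T0 y0"
    have x0: "norm x0 = 1" unfolding x0_def using \<open>blinfun_apply T0 y0 \<noteq> 0\<close> by simp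
    define KZ where "KZ = (Z \<inter> cball 0 1 \<inter> sphere 0 1) \<union> {x0}"
    define KY where "KY = (UNIV \<inter> cball (0::'b) 1 \<inter> sphere 0 1)"
    have "compact (Z \<inter> cball 0 1 \<inter> sphere 0 1)"
      by (rule compact_Int_closed) (use fin_span_compact[OF BZ(1)] BZ(2) in auto, rule closed_sphere_gen)
    then have cKZ: "compact KZ" unfolding KZ_def by (intro compact_Un compact_sing)
    have cKY: "compact KY" unfolding KY_def
      by (rule compact_Int_closed) (use fin_span_compact[OF BY(1)] BY(2) in auto, rule closed_sphere_gen)
    define d where "d = e / 3"
    have d: "d > 0" using e by (simp add: d_def)
    obtain NZ where NZ: "finite NZ" "NZ \<subseteq> KZ" "KZ \<subseteq> (\<Union>x\<in>NZ. ball x d)"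
      using seq_compact_imp_totally_bounded[OF compact_imp_seq_compact[OF cKZ], rule_format, OF d] by (elim exE conjE) blast
    obtain NY where NY: "finite NY" "NY \<subseteq> KY" "KY \<subseteq> (\<Union>x\<in>NY. ball x d)"
      using seq_compact_imp_totally_bounded[OF compact_imp_seq_compact[OF cKY], rule_format, OF d] by (elim exE conjE) blast
    have s1: "NZ \<subseteq> sphere 0 1" using NZ(2) x0 unfolding KZ_def by auto
    have s2: "NY \<subseteq> sphere 0 1" using NY(2) unfolding KY_def by auto
    have "\<exists>T::'b \<Rightarrow>\<^sub>L 'a. norm T = 1 \<and> (\<forall>z\<in>NZ. \<forall>y\<in>NY. norm (z + blinfun_apply T y) > 2 - d)"
      by (rule Q[rule_format, OF d]) (intro conjI NZ(1) NY(1) s1 s2)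
    then obtain T :: "'b \<Rightarrow>\<^sub>L 'a" where T: "norm T = 1"
      "\<And>z y. z \<in> NZ \<Longrightarrow> y \<in> NY \<Longrightarrow> norm (z + blinfun_apply T y) > 2 - d"
      by blast
    have C: "norm (x + blinfun_apply T y) \<ge> 2 - e" if x: "x \<in> KZ" and y: "y \<in> KY" for x y
    proof -
      obtain k where k: "k \<in> NZ" "dist k x < d" using NZ(3) x by auto
      obtain k' where k': "k' \<in> NY" "dist k' y < d" using NY(3) y by auto
      have "norm (blinfun_apply T (y - k')) \<le> norm (y - k')"
        using norm_blinfun[of T "y - k'"] T(1) by simp
      also have "\<dots> < d" using k' by (simp add: dist_norm norm_minus_commute)
      finally have t1: "norm (blinfun_apply T y - blinfun_apply T k') < d"
        by (simp add: blinfun.diff_right)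
      have t2: "norm (x - k) < d" using k by (simp add: dist_norm norm_minus_commute)
      have "k + blinfun_apply T k' = (x + blinfun_apply T y) - ((x - k) + (blinfun_apply T y - blinfun_apply T k'))"
        by (simp add: algebra_simps)
      then have "norm (k + blinfun_apply T k') \<le> norm (x + blinfun_apply T y) + norm ((x - k) + (blinfun_apply T y - blinfun_apply T k'))"
        by (metis norm_triangle_ineq4)
      also have "\<dots> \<le> norm (x + blinfun_apply T y) + (norm (x - k) + norm (blinfun_apply T y - blinfun_apply T k'))"
        using norm_triangle_ineq by (rule add_left_mono)
      finally have "norm (k + blinfun_apply T k') \<le> norm (x + blinfun_apply T y) + norm (x - k) + norm (blinfun_apply T y - blinfun_apply T k')"
        by simp
      then show ?thesis using T(2)[OF k(1) k'(1)] t1 t2 unfolding d_def by linarith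
    qed
    have "\<forall>y z. z \<in> Z \<longrightarrow> norm (z + blinfun_apply T y) \<ge> (1 - e) * (norm z + norm y)"
    proof (intro allI impI)
      fix y z assume z: "z \<in> Z"
      show "norm (z + blinfun_apply T y) \<ge> (1 - e) * (norm z + norm y)"
      proof (cases "y = 0")
        case True
        have "(1 - e) * norm z \<le> 1 * norm z" by (rule mult_right_mono) (use e in auto)
        then show ?thesis using True by simp
      next
        case False
        define xz where "xz = (if z = 0 then x0 else (1 / norm z) *\<^sub>R z)"
        have xzK: "xz \<in> KZ" unfolding KZ_def xz_def
          using z BZ(2) span_scale[of z BZ] by auto
        have xz1: "norm xz = 1" using xzK x0 unfolding KZ_def by auto
        have zx: "z = norm z *\<^sub>R xz" unfolding xz_def by auto
        define v where "v = blinfun_apply T ((1 / norm y) *\<^sub>R y)"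
        have yK: "(1 / norm y) *\<^sub>R y \<in> KY" unfolding KY_def using False by simp
        have Ty: "blinfun_apply T y = norm y *\<^sub>R v" unfolding v_def
          using False by (simp add: blinfun.scaleR_right)
        have v1: "norm v \<le> 1" unfolding v_def
          using norm_blinfun[of T "(1 / norm y) *\<^sub>R y"] T(1) False by simp
        have "norm (xz + v) \<ge> 2 - e" unfolding v_def using C[OF xzK yK] .
        then have "norm (norm z *\<^sub>R xz + norm y *\<^sub>R v) \<ge> (1 - e) * (norm z + norm y)"
          using key_ineq[OF xz1 v1] e by simp
        then show ?thesis using zx Ty by simp
      qed
    qed
    then show "\<exists>T::'b \<Rightarrow>\<^sub>L 'a. norm T = 1 \<and> (\<forall>y z. z \<in> Z \<longrightarrow> norm (z + blinfun_apply T y) \<ge> (1 - e) * (norm z + norm y))"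
      using T(1) by blast
  qed
qed

end
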